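(* Let $G$ be a finite saturable graph with diameter at most $2$. Then $G$ is supersaturable.
   Context: For a simple graph $G$ and a positive integer $k$, a proper $k$-total difference labeling (TDL) of $G$ is a function $f: V(G)\to\{1,\dots,k\}$, extended to edges by $f(\{u,v\}) = |f(u)-f(v)|$, such that: (i) adjacent vertices receive different labels; (ii) two distinct edges sharing a vertex receive different labels; (iii) no edge receives the same label as either of its endpoints. $\chi_{td}(G)$ denotes the smallest $k$ for which such a labeling exists. A TDL of a graph $G$ of order $n$ is saturated if $\chi_{td}(G)=n$ and the set of vertex labels used is exactly $\{1,2,\dots,\chi_{td}(G)\}$. $G$ is saturable if it has at least one saturated labeling, and supersaturable if every proper $\chi_{td}(G)$-total difference labeling of $G$ is saturated. *)

theory Defs
  imports Main
begin

definition simple_graph :: "'a set \<Rightarrow> ('a \<Rightarrow> 'a \<Rightarrow> bool) \<Rightarrow> bool" where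
  "simple_graph V E \<longleftrightarrow> finite V \<and> (\<forall>u v. E u v \<longrightarrow> u \<in> V \<and> v \<in> V)
     \<and> (\<forall>u v. E u v \<longrightarrow> E v u) \<and> (\<forall>v. \<not> E v v)"

definition diam_le_2 :: "'a set \<Rightarrow> ('a \<Rightarrow> 'a \<Rightarrow> bool) \<Rightarrow> bool" where
  "diam_le_2 V E \<longleftrightarrow> (\<forall>u\<in>V. \<forall>v\<in>V. u \<noteq> v \<longrightarrow> E u v \<or> (\<exists>w. E u w \<and> E w v))"

text \<open>Proper k-total difference labeling; edge label of {u,v} is |f u - f v|.\<close>
definition proper_tdl :: "'a set \<Rightarrow> ('a \<Rightarrow> 'a \<Rightarrow> bool) \<Rightarrow> nat \<Rightarrow> ('a \<Rightarrow> int) \<Rightarrow> bool" where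
  "proper_tdl V E k f \<longleftrightarrow>
     (\<forall>v\<in>V. f v \<in> {1..int k})
   \<and> (\<forall>u v. E u v \<longrightarrow> f u \<noteq> f v)
   \<and> (\<forall>u v w. E u v \<and> E u w \<and> v \<noteq> w \<longrightarrow> \<bar>f u - f v\<bar> \<noteq> \<bar>f u - f w\<bar>)
   \<and> (\<forall>u v. E u v \<longrightarrow> \<bar>f u - f v\<bar> \<noteq> f u \<and> \<bar>f u - f v\<bar> \<noteq> f v)"

definition chi_td :: "'a set \<Rightarrow> ('a \<Rightarrow> 'a \<Rightarrow> bool) \<Rightarrow> nat" where
  "chi_td V E = (LEAST k. 0 < k \<and> (\<exists>f. proper_tdl V E k f))"

definition saturated_tdl :: "'a set \<Rightarrow> ('a \<Rightarrow> 'a \<Rightarrow> bool) \<Rightarrow> ('a \<Rightarrow> int) \<Rightarrow> bool" where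
  "saturated_tdl V E f \<longleftrightarrow> proper_tdl V E (chi_td V E) f \<and> chi_td V E = card V
     \<and> f ` V = {1..int (chi_td V E)}"

definition saturable :: "'a set \<Rightarrow> ('a \<Rightarrow> 'a \<Rightarrow> bool) \<Rightarrow> bool" where
  "saturable V E \<longleftrightarrow> (\<exists>f. saturated_tdl V E f)"

definition supersaturable :: "'a set \<Rightarrow> ('a \<Rightarrow> 'a \<Rightarrow> bool) \<Rightarrow> bool" where
  "supersaturable V E \<longleftrightarrow> (\<forall>f. proper_tdl V E (chi_td V E) f \<longrightarrow> saturated_tdl V E f)"

end

theory Submission
  imports Defs
begin

theorem mainTheorem12:
  fixes V :: "'a set" and E :: "'a \<Rightarrow> 'a \<Rightarrow> bool"
  assumes "simple_graph V E"
    and "saturable V E"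
    and "diam_le_2 V E"
  shows "supersaturable V E"
  unfolding supersaturable_def
proof (intro allI impI)
  fix g assume g: "proper_tdl V E (chi_td V E) g"
  obtain f where "saturated_tdl V E f" using assms(2) unfolding saturable_def by blast
  then have n: "chi_td V E = card V" unfolding saturated_tdl_def by blast
  have fin: "finite V" using assms(1) unfolding simple_graph_def by blast
  have inj: "inj_on g V"
  proof (rule inj_onI, rule ccontr)
    fix u v assume uv: "u \<in> V" "v \<in> V" "g u = g v" "u \<noteq> v"
    then have "E u v \<or> (\<exists>w. E u w \<and> E w v)" using assms(3) unfolding diam_le_2_def by blast
    then show False
    proof
      assume "E u v" then show False using g uv unfolding proper_tdl_def by blast
    next
      assume "\<exists>w. E u w \<and> E w v"
      then obtain w where "E w u" "E w v" using assms(1) unfolding simple_graph_def by blast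
      then show False using g uv unfolding proper_tdl_def by metis
    qed
  qed
  have sub: "g ` V \<subseteq> {1..int (chi_td V E)}" using g unfolding proper_tdl_def by blast
  have "card (g ` V) = card {1..int (chi_td V E)}" using inj n by (simp add: card_image)
  then have "g ` V = {1..int (chi_td V E)}"
    using sub by (intro card_subset_eq) auto
  then show "saturated_tdl V E g" using g n unfolding saturated_tdl_def by blast
qed

end
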